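(* Let $\overline{G}$ be the roommate diversity game with red agents $R=\{r_1,r_2,r_3\}$, blue agents $B=\{b_1,\dots,b_6\}$, room size $3$, and the trichotomous preferences described in the context. Then every outcome $\pi$ of $\overline{G}$ satisfies $|D_\pi^n\cup D_\pi^-|\ge 2$, i.e. at least two agents are in a room whose fraction they do not approve of.
   Context: In a roommate diversity game with agent set $N=R\cup B$ ($R$ red, $B$ blue) and room size $s$, an outcome is a partition of $N$ into rooms of size $s$; $\pi(a)$ is the room containing $a$ and $\theta(C)=|C\cap R|/|C|$ is the fraction of red agents in room $C$. Each agent $a$ has a trichotomous preference given by a partition of the fractions into sets $D_a^+$ (approved), $D_a^n$ (neutral), $D_a^-$ (disapproved), possibly empty, with every approved fraction strictly preferred to every neutral one, every neutral one strictly preferred to every disapproved one, and indifference within each set. For an outcome $\pi$, $D_\pi^+=\{a:\theta(\pi(a))\in D_a^+\}$, and $D_\pi^n$, $D_\pi^-$ are defined analogously. The game $\overline{G}$: $s=3$, and fractions are in $\{0,1/3,2/3,1\}$; $r_1$: $D^+=\{1/3\}$, $D^-=\{2/3,1\}$; $r_2,r_3$: $D^+=\{2/3\}$, $D^-=\{1/3,1\}$; $b_1,b_2,b_3,b_4$: $D^+=\{1/3\}$, $D^n=\{2/3\}$, $D^-=\{0\}$; $b_5,b_6$: $D^+=\{0\}$, $D^-=\{1/3,2/3\}$. (Fractions not listed for an agent are impossible for its color: a red agent is never in a room of fraction $0$, a blue agent never in a room of fraction $1$.) *)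

theory Defs
  imports Complex_Main "HOL-Library.Disjoint_Sets"
begin

datatype agent = r1 | r2 | r3 | b1 | b2 | b3 | b4 | b5 | b6

lemma UNIV_agent: "(UNIV :: agent set) = {r1, r2, r3, b1, b2, b3, b4, b5, b6}"
  by (auto intro: agent.exhaust)

instance agent :: finite
  by standard (simp add: UNIV_agent)

definition Red :: "agent set" where "Red = {r1, r2, r3}"
definition Blue :: "agent set" where "Blue = {b1, b2, b3, b4, b5, b6}"

definition is_outcome :: "nat \<Rightarrow> agent set set \<Rightarrow> bool" where
  "is_outcome s \<pi> \<longleftrightarrow> partition_on (UNIV :: agent set) \<pi> \<and> (\<forall>C\<in>\<pi>. card C = s)"

definition room :: "agent set set \<Rightarrow> agent \<Rightarrow> agent set" where
  "room \<pi> a = (THE C. C \<in> \<pi> \<and> a \<in> C)"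

definition theta :: "agent set \<Rightarrow> rat" where
  "theta C = of_nat (card (C \<inter> Red)) / of_nat (card C)"

fun Dplus :: "agent \<Rightarrow> rat set" where
  "Dplus r1 = {1/3}"
| "Dplus r2 = {2/3}"
| "Dplus r3 = {2/3}"
| "Dplus b5 = {0}"
| "Dplus b6 = {0}"
| "Dplus _ = {1/3}"

fun Dneutral :: "agent \<Rightarrow> rat set" where
  "Dneutral r1 = {}"
| "Dneutral r2 = {}"
| "Dneutral r3 = {}"
| "Dneutral b5 = {}"
| "Dneutral b6 = {}"
| "Dneutral _ = {2/3}"

fun Dminus :: "agent \<Rightarrow> rat set" where
  "Dminus r1 = {2/3, 1}"
| "Dminus r2 = {1/3, 1}"
| "Dminus r3 = {1/3, 1}"
| "Dminus b5 = {1/3, 2/3}"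
| "Dminus b6 = {1/3, 2/3}"
| "Dminus _ = {0}"

definition D_plus_out :: "agent set set \<Rightarrow> agent set" where
  "D_plus_out \<pi> = {a. theta (room \<pi> a) \<in> Dplus a}"
definition D_n_out :: "agent set set \<Rightarrow> agent set" where
  "D_n_out \<pi> = {a. theta (room \<pi> a) \<in> Dneutral a}"
definition D_minus_out :: "agent set set \<Rightarrow> agent set" where
  "D_minus_out \<pi> = {a. theta (room \<pi> a) \<in> Dminus a}"

end

theory Submission
  imports Defs
begin

lemma part_uniq:
  assumes "is_outcome 3 \<pi>" "C \<in> \<pi>" "D \<in> \<pi>" "a \<in> C" "a \<in> D"
  shows "C = D"
proof (rule ccontr)
  assume ne: "C \<noteq> D"
  have p: "partition_on UNIV \<pi>" using assms(1) by (simp add: is_outcome_def)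
  have "C \<inter> D = {}" by (rule disjointD[OF partition_onD2[OF p] assms(2) assms(3) ne])
  thus False using assms(4,5) by blast
qed

lemma room_facts:
  assumes "is_outcome 3 \<pi>"
  shows "a \<in> room \<pi> a \<and> room \<pi> a \<in> \<pi>"
proof -
  have p: "partition_on UNIV \<pi>" using assms by (simp add: is_outcome_def)
  obtain C where C: "C \<in> \<pi>" "a \<in> C" using partition_onD1[OF p] by blast
  have "room \<pi> a = C" unfolding room_def
  proof (rule the_equality)
    show "C \<in> \<pi> \<and> a \<in> C" using C by simp
    fix D assume "D \<in> \<pi> \<and> a \<in> D"
    thus "D = C" using part_uniq[OF assms _ C(1) _ C(2)] by blast
  qed
  thus ?thesis using C by simp
qed

lemma room_eq:
  assumes "is_outcome 3 \<pi>" "C \<in> \<pi>" "a \<in> C"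
  shows "room \<pi> a = C"
  using part_uniq[OF assms(1) _ assms(2) _ assms(3)] room_facts[OF assms(1), of a] by blast

lemma mem_room:
  assumes "is_outcome 3 \<pi>"
  shows "b \<in> room \<pi> a \<longleftrightarrow> room \<pi> b = room \<pi> a"
proof
  assume "b \<in> room \<pi> a"
  thus "room \<pi> b = room \<pi> a" using room_eq[OF assms] room_facts[OF assms, of a] by blast
next
  assume "room \<pi> b = room \<pi> a"
  thus "b \<in> room \<pi> a" using room_facts[OF assms, of b] by simp
qed

lemma sym_room:
  assumes "is_outcome 3 \<pi>"
  shows "a \<in> room \<pi> y \<longleftrightarrow> y \<in> room \<pi> a"
  using mem_room[OF assms, of a y] mem_room[OF assms, of y a] by auto

lemma card_room:
  assumes "is_outcome 3 \<pi>"
  shows "card (room \<pi> a) = 3"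
  using room_facts[OF assms, of a] assms by (simp add: is_outcome_def)

lemma theta_room:
  assumes "is_outcome 3 \<pi>" "room \<pi> a \<inter> Red = S"
  shows "theta (room \<pi> a) = of_nat (card S) / 3"
  using card_room[OF assms(1)] assms(2) by (simp add: theta_def)

lemma two:
  assumes "x \<in> S" "y \<in> S" "x \<noteq> y"
  shows "card (S :: agent set) \<ge> 2"
proof -
  have "card {x, y} \<le> card S" by (rule card_mono) (use assms in auto)
  thus ?thesis using assms by simp
qed

lemma pigeon:
  assumes "is_outcome 3 \<pi>" "{r1, r2, r3} \<subseteq> room \<pi> a \<union> room \<pi> b"
  shows "\<exists>y \<in> {b1, b2, b3, b4}. y \<notin> room \<pi> a \<union> room \<pi> b"
proof (rule ccontr)
  assume "\<not> ?thesis"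
  hence "{b1, b2, b3, b4} \<subseteq> room \<pi> a \<union> room \<pi> b" by blast
  hence s: "{r1, r2, r3, b1, b2, b3, b4} \<subseteq> room \<pi> a \<union> room \<pi> b" using assms(2) by blast
  have "card {r1, r2, r3, b1, b2, b3, b4} \<le> card (room \<pi> a \<union> room \<pi> b)"
    by (rule card_mono[OF _ s]) simp
  also have "\<dots> \<le> card (room \<pi> a) + card (room \<pi> b)" by (rule card_Un_le)
  also have "\<dots> = 6" using card_room[OF assms(1), of a] card_room[OF assms(1), of b] by simp
  finally have "card {r1, r2, r3, b1, b2, b3, b4} \<le> 6" .
  thus False by simp
qed

theorem mainTheorem6:
  assumes "is_outcome 3 \<pi>"
  shows "card (D_n_out \<pi> \<union> D_minus_out \<pi>) \<ge> 2"
proof -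
  note A = assms
  note mr = mem_room[OF A]
  note rf = room_facts[OF A]
  let ?S = "D_n_out \<pi> \<union> D_minus_out \<pi>"
  have blue0: "y \<in> ?S" if "y \<in> {b1, b2, b3, b4}" "room \<pi> y \<inter> Red = {}" for y
    using theta_room[OF A that(2)] that(1) by (auto simp: D_minus_out_def)
  show ?thesis
  proof (cases "r2 \<in> room \<pi> r1")
    case T2: True
    show ?thesis
    proof (cases "r3 \<in> room \<pi> r1")
      case True
      have "room \<pi> r1 \<inter> Red = {r1,r2,r3}" using True T2 rf[of r1] by (auto simp: Red_def)
      hence "room \<pi> r2 \<inter> Red = {r1,r2,r3}" using T2 mr by metis
      have "r1 \<in> ?S" using theta_room[OF A \<open>room \<pi> r1 \<inter> Red = {r1,r2,r3}\<close>]
        by (simp add: D_minus_out_def)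
      moreover have "r2 \<in> ?S" using theta_room[OF A \<open>room \<pi> r2 \<inter> Red = {r1,r2,r3}\<close>]
        by (simp add: D_minus_out_def)
      ultimately show ?thesis by (rule two[of r1 _ r2]) auto
    next
      case False
      have e: "room \<pi> r1 \<inter> Red = {r1,r2}" using False T2 rf[of r1] by (auto simp: Red_def)
      have "r1 \<in> ?S" using theta_room[OF A e] by (simp add: D_minus_out_def)
      obtain y where y: "y \<in> {b1,b2,b3,b4}" "y \<notin> room \<pi> r1 \<union> room \<pi> r3"
        using pigeon[OF A, of r1 r3] T2 rf[of r1] rf[of r2] rf[of r3] by blast
      have "room \<pi> y \<inter> Red = {}" using y T2 sym_room[OF A, of r1 y] sym_room[OF A, of r2 y] sym_room[OF A, of r3 y] mr[of r2 r1] rf[of r1] rf[of r2] rf[of r3]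
        unfolding Red_def by blast
      hence "y \<in> ?S" using blue0 y by auto
      thus ?thesis using \<open>r1 \<in> ?S\<close> y by (intro two[of r1 _ y]) auto
    qed
  next
    case F2: False
    show ?thesis
    proof (cases "r3 \<in> room \<pi> r1")
      case True
      have e: "room \<pi> r1 \<inter> Red = {r1,r3}" using True F2 rf[of r1] by (auto simp: Red_def)
      have "r1 \<in> ?S" using theta_room[OF A e] by (simp add: D_minus_out_def)
      obtain y where y: "y \<in> {b1,b2,b3,b4}" "y \<notin> room \<pi> r1 \<union> room \<pi> r2"
        using pigeon[OF A, of r1 r2] True rf[of r1] rf[of r2] rf[of r3] by blast
      have "room \<pi> y \<inter> Red = {}" using y True sym_room[OF A, of r1 y] sym_room[OF A, of r2 y] sym_room[OF A, of r3 y] mr[of r3 r1] rf[of r1] rf[of r2] rf[of r3]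
        unfolding Red_def by blast
      hence "y \<in> ?S" using blue0 y by auto
      thus ?thesis using \<open>r1 \<in> ?S\<close> y by (intro two[of r1 _ y]) auto
    next
      case F3: False
      show ?thesis
      proof (cases "r3 \<in> room \<pi> r2")
        case False
        have n12: "r1 \<notin> room \<pi> r2" using F2 mr by metis
        have n13: "r1 \<notin> room \<pi> r3" using F3 mr by metis
        have n23: "r2 \<notin> room \<pi> r3" using False mr by metis
        have e2: "room \<pi> r2 \<inter> Red = {r2}" using False n12 rf[of r2] by (auto simp: Red_def)
        have e3: "room \<pi> r3 \<inter> Red = {r3}" using n13 n23 rf[of r3] by (auto simp: Red_def)
        have "r2 \<in> ?S" using theta_room[OF A e2] by (simp add: D_minus_out_def)
        moreover have "r3 \<in> ?S" using theta_room[OF A e3] by (simp add: D_minus_out_def)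
        ultimately show ?thesis by (rule two[of r2 _ r3]) auto
      next
        case True
        have n12: "r1 \<notin> room \<pi> r2" using F2 mr by metis
        have e: "room \<pi> r2 \<inter> Red = {r2,r3}" using True n12 rf[of r2] by (auto simp: Red_def)
        have "card (room \<pi> r2 - {r2,r3}) = 1"
          using card_room[OF A, of r2] True rf[of r2] by (simp add: card_Diff_subset)
        then obtain x where x: "room \<pi> r2 - {r2,r3} = {x}" by (meson card_1_singletonE)
        have xr: "x \<notin> Red" "x \<in> room \<pi> r2" using x e by auto
        have ex: "room \<pi> x \<inter> Red = {r2,r3}" using xr(2) e mr by metis
        have xb: "x \<in> {b1,b2,b3,b4,b5,b6}" using xr(1) by (cases x) (auto simp: Red_def)
        have "x \<in> ?S" using theta_room[OF A ex] xb
          by (auto simp: D_minus_out_def D_n_out_def)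
        obtain y where y: "y \<in> {b1,b2,b3,b4}" "y \<notin> room \<pi> r2 \<union> room \<pi> r1"
          using pigeon[OF A, of r2 r1] True rf[of r1] rf[of r2] rf[of r3] by blast
        have "room \<pi> y \<inter> Red = {}" using y True sym_room[OF A, of r1 y] sym_room[OF A, of r2 y] sym_room[OF A, of r3 y] mr[of r3 r2] rf[of r1] rf[of r2] rf[of r3]
        unfolding Red_def by blast
        hence "y \<in> ?S" using blue0 y by auto
        moreover have "x \<noteq> y" using xr(2) y by auto
        ultimately show ?thesis using \<open>x \<in> ?S\<close> by (intro two[of x _ y]) auto
      qed
    qed
  qed
qed

end
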